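(* Let $\Theta$ be a finite set, $b$ a belief function on $\Theta$ with mass function $m_b$, and $\emptyset \subsetneq A \subseteq \Theta$. The set of $L_1$ conditional belief functions of $b$ with respect to $A$ in the mass space (the minimizers of $\|\vec{m}_b - \vec{m}_a\|_{L_1}$ over $\vec{m}_a \in \mathcal{M}_A$) is the simplex \[ \mathcal{M}_{L_1,A}[b] = Cl\big(\vec{m}[b]|_{L_1}^B A,\ \emptyset \subsetneq B \subseteq A\big), \] where, for each $\emptyset\subsetneq B\subseteq A$, the vertex $\vec{m}[b]|_{L_1}^B A$ is the mass vector $\vec{m}_a\in\mathcal{M}_A$ with \[ m_a(B) = m_b(B) + 1 - b(A) = m_b(B) + pl_b(A^c), \qquad m_a(X) = m_b(X)\ \ \forall\, \emptyset \subsetneq X \subsetneq A,\ X \neq B. \]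
   Context: A mass function on a finite set $\Theta$ is $m:2^\Theta\to[0,1]$ with $m(\emptyset)=0$ and $\sum_{A\subseteq\Theta} m(A)=1$; the associated belief function is $b(A)=\sum_{B\subseteq A} m_b(B)$ and plausibility $pl_b(A)=1-b(A^c)$. The mass vector of $b$ is $\vec{m}_b=[m_b(B)]_{\emptyset\subsetneq B\subseteq\Theta}\in\mathbb{R}^{2^{|\Theta|}-1}$. For $\emptyset\subsetneq A\subseteq\Theta$, $\mathcal{M}_A$ is the set of mass vectors of belief functions all of whose focal elements (subsets of nonzero mass) are subsets of $A$; in particular such vectors have zero coordinates outside subsets of $A$ and coordinates over subsets of $A$ summing to $1$. $Cl(\cdot)$ denotes convex hull. The $L_1$ distance is $\|\vec{m}_b-\vec{m}_{b'}\|_{L_1}=\sum_{\emptyset\subsetneq B\subseteq\Theta}|m_b(B)-m_{b'}(B)|$. *)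

theory Defs
  imports Complex_Main
begin

text \<open>Mass functions on a finite frame Theta are represented as functions
  m :: 'a set => real which vanish outside the subsets of Theta. The mass
  vector of m is the family of values m B for nonempty B contained in Theta.\<close>

definition is_mass :: "'a set \<Rightarrow> ('a set \<Rightarrow> real) \<Rightarrow> bool" where
  "is_mass \<Theta> m \<longleftrightarrow> m {} = 0 \<and> (\<forall>B. 0 \<le> m B) \<and> (\<forall>B. \<not> B \<subseteq> \<Theta> \<longrightarrow> m B = 0)
     \<and> (\<Sum>B\<in>Pow \<Theta>. m B) = 1"

definition bel :: "('a set \<Rightarrow> real) \<Rightarrow> 'a set \<Rightarrow> real" where
  "bel m A = (\<Sum>B\<in>Pow A. m B)"

definition pl :: "'a set \<Rightarrow> ('a set \<Rightarrow> real) \<Rightarrow> 'a set \<Rightarrow> real" where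
  "pl \<Theta> m A = 1 - bel m (\<Theta> - A)"

definition mass_space_A :: "'a set \<Rightarrow> 'a set \<Rightarrow> ('a set \<Rightarrow> real) set" where
  "mass_space_A \<Theta> A = {m. is_mass \<Theta> m \<and> (\<forall>B. m B \<noteq> 0 \<longrightarrow> B \<subseteq> A)}"

definition L1_dist :: "'a set \<Rightarrow> ('a set \<Rightarrow> real) \<Rightarrow> ('a set \<Rightarrow> real) \<Rightarrow> real" where
  "L1_dist \<Theta> m m' = (\<Sum>B\<in>Pow \<Theta> - {{}}. \<bar>m B - m' B\<bar>)"

definition L1_cond :: "'a set \<Rightarrow> ('a set \<Rightarrow> real) \<Rightarrow> 'a set \<Rightarrow> ('a set \<Rightarrow> real) set" where
  "L1_cond \<Theta> m A = {ma \<in> mass_space_A \<Theta> A.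
      \<forall>m' \<in> mass_space_A \<Theta> A. L1_dist \<Theta> m ma \<le> L1_dist \<Theta> m m'}"

text \<open>Vertex m[b]|^B_{L1} A: adds 1 - b(A) to m_b(B), keeps m_b(X) on the other nonempty
  subsets X of A (for X = A, B \<noteq> A this is forced by normalisation), zero elsewhere.\<close>
definition L1_vertex :: "('a set \<Rightarrow> real) \<Rightarrow> 'a set \<Rightarrow> 'a set \<Rightarrow> ('a set \<Rightarrow> real)" where
  "L1_vertex m A B = (\<lambda>X. if X = B then m B + 1 - bel m A
                          else if X \<noteq> {} \<and> X \<subseteq> A then m X else 0)"

definition Cl :: "'i set \<Rightarrow> ('i \<Rightarrow> ('a set \<Rightarrow> real)) \<Rightarrow> ('a set \<Rightarrow> real) set" where
  "Cl I v = {(\<lambda>X. \<Sum>i\<in>I. u i * v i X) | u. (\<forall>i\<in>I. 0 \<le> u i) \<and> (\<Sum>i\<in>I. u i) = 1}"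

end

theory Submission
  imports Defs
begin

lemma beta_facts:
  assumes fin: "finite \<Theta>" and mass: "is_mass \<Theta> m" and sub: "A \<subseteq> \<Theta>"
  shows "bel m A \<le> 1" "sum m (Pow A - {{}}) = bel m A"
    "sum m (Pow \<Theta> - Pow A) = 1 - bel m A"
proof -
  have fA: "finite (Pow A)" using fin sub finite_subset by blast
  have PP: "Pow A \<subseteq> Pow \<Theta>" using sub by blast
  have nn: "\<And>B. 0 \<le> m B" and m0: "m {} = 0" and s1: "sum m (Pow \<Theta>) = 1"
    using mass unfolding is_mass_def by auto
  have "sum m (Pow \<Theta> - Pow A) = sum m (Pow \<Theta>) - sum m (Pow A)"
    using PP fin by (simp add: sum_diff)
  then show "sum m (Pow \<Theta> - Pow A) = 1 - bel m A" using s1 by (simp add: bel_def)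
  have "sum m (Pow A) \<le> sum m (Pow \<Theta>)"
    using PP fin nn by (intro sum_mono2) auto
  then show "bel m A \<le> 1" using s1 by (simp add: bel_def)
  show "sum m (Pow A - {{}}) = bel m A"
    using fA m0 by (simp add: sum_diff1 bel_def)
qed

lemma MA_facts:
  assumes fin: "finite \<Theta>" and sub: "A \<subseteq> \<Theta>" and ma: "ma \<in> mass_space_A \<Theta> A"
  shows "sum ma (Pow A - {{}}) = 1" "\<And>X. X \<notin> Pow A - {{}} \<Longrightarrow> ma X = 0"
    "\<And>X. 0 \<le> ma X"
proof -
  have fA: "finite (Pow A)" using fin sub finite_subset by blast
  have PP: "Pow A \<subseteq> Pow \<Theta>" using sub by blast
  have m0: "ma {} = 0" and s1: "sum ma (Pow \<Theta>) = 1" and out: "\<And>B. ma B \<noteq> 0 \<Longrightarrow> B \<subseteq> A"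
    and nn: "\<And>X. 0 \<le> ma X"
    using ma unfolding mass_space_A_def is_mass_def by auto
  show "\<And>X. 0 \<le> ma X" by (rule nn)
  have "sum ma (Pow \<Theta>) = sum ma (Pow A)"
    using PP fin out by (intro sum.mono_neutral_right) auto
  then show "sum ma (Pow A - {{}}) = 1" using s1 fA m0 by (simp add: sum_diff1)
  show "\<And>X. X \<notin> Pow A - {{}} \<Longrightarrow> ma X = 0" using m0 out by auto
qed

lemma dist_eq:
  assumes fin: "finite \<Theta>" and mass: "is_mass \<Theta> m" and sub: "A \<subseteq> \<Theta>"
    and ma: "ma \<in> mass_space_A \<Theta> A"
  shows "L1_dist \<Theta> m ma = (\<Sum>X\<in>Pow A - {{}}. \<bar>m X - ma X\<bar>) + (1 - bel m A)"
proof -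
  have fA: "finite (Pow A)" using fin sub finite_subset by blast
  have nn: "\<And>B. 0 \<le> m B" using mass unfolding is_mass_def by auto
  have out: "\<And>X. X \<notin> Pow A - {{}} \<Longrightarrow> ma X = 0" using MA_facts[OF fin sub ma] by blast
  have eq: "Pow \<Theta> - {{}} = (Pow A - {{}}) \<union> (Pow \<Theta> - Pow A)" using sub by blast
  have "L1_dist \<Theta> m ma = (\<Sum>X\<in>Pow A - {{}}. \<bar>m X - ma X\<bar>) + (\<Sum>X\<in>Pow \<Theta> - Pow A. \<bar>m X - ma X\<bar>)"
    unfolding L1_dist_def eq using fin fA by (intro sum.union_disjoint) auto
  also have "(\<Sum>X\<in>Pow \<Theta> - Pow A. \<bar>m X - ma X\<bar>) = sum m (Pow \<Theta> - Pow A)"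
    using out nn by (intro sum.cong) auto
  also have "\<dots> = 1 - bel m A" using beta_facts[OF fin mass sub] by simp
  finally show ?thesis .
qed

lemma dist_char:
  assumes fin: "finite \<Theta>" and mass: "is_mass \<Theta> m" and sub: "A \<subseteq> \<Theta>"
    and ma: "ma \<in> mass_space_A \<Theta> A"
  shows "L1_dist \<Theta> m ma \<ge> 2 * (1 - bel m A)"
    "L1_dist \<Theta> m ma = 2 * (1 - bel m A) \<longleftrightarrow> (\<forall>X\<in>Pow A - {{}}. m X \<le> ma X)"
proof -
  let ?P = "Pow A - {{}}"
  have fA: "finite ?P" using fin sub finite_subset by blast
  have s: "(\<Sum>X\<in>?P. ma X - m X) = 1 - bel m A"
    using MA_facts(1)[OF fin sub ma] beta_facts(2)[OF fin mass sub] by (simp add: sum_subtractf)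
  have d: "L1_dist \<Theta> m ma - 2 * (1 - bel m A) = (\<Sum>X\<in>?P. \<bar>m X - ma X\<bar> - (ma X - m X))"
    using dist_eq[OF assms] s by (simp add: sum_subtractf)
  have nn: "\<And>X. 0 \<le> \<bar>m X - ma X\<bar> - (ma X - m X)" by simp
  have "0 \<le> (\<Sum>X\<in>?P. \<bar>m X - ma X\<bar> - (ma X - m X))" using nn by (simp add: sum_nonneg)
  then show "L1_dist \<Theta> m ma \<ge> 2 * (1 - bel m A)" using d by simp
  have "L1_dist \<Theta> m ma = 2 * (1 - bel m A) \<longleftrightarrow> (\<Sum>X\<in>?P. \<bar>m X - ma X\<bar> - (ma X - m X)) = 0"
    using d by linarith
  also have "\<dots> \<longleftrightarrow> (\<forall>X\<in>?P. \<bar>m X - ma X\<bar> - (ma X - m X) = 0)"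
    using fA nn by (simp add: sum_nonneg_eq_0_iff)
  also have "\<dots> \<longleftrightarrow> (\<forall>X\<in>?P. m X \<le> ma X)"
  proof -
    have "\<And>a b::real. \<bar>a - b\<bar> - (b - a) = 0 \<longleftrightarrow> a \<le> b" by arith
    then show ?thesis by simp
  qed
  finally show "L1_dist \<Theta> m ma = 2 * (1 - bel m A) \<longleftrightarrow> (\<forall>X\<in>Pow A - {{}}. m X \<le> ma X)" .
qed

lemma Cl_eval:
  assumes fin: "finite (Pow A)" and u1: "(\<Sum>i\<in>Pow A - {{}}. u i) = 1"
  shows "(\<lambda>X. \<Sum>i\<in>Pow A - {{}}. u i * L1_vertex m A i X)
       = (\<lambda>X. if X \<in> Pow A - {{}} then m X + u X * (1 - bel m A) else 0)"
proof
  fix X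
  let ?P = "Pow A - {{}}"
  show "(\<Sum>i\<in>?P. u i * L1_vertex m A i X) = (if X \<in> ?P then m X + u X * (1 - bel m A) else 0)"
  proof (cases "X \<in> ?P")
    case True
    have "(\<Sum>i\<in>?P. u i * L1_vertex m A i X) = (\<Sum>i\<in>?P. u i * m X + (if i = X then u X * (1 - bel m A) else 0))"
      using True by (intro sum.cong) (auto simp: L1_vertex_def algebra_simps)
    also have "\<dots> = m X + u X * (1 - bel m A)"
      using True fin u1 by (simp add: sum.distrib sum_distrib_right[symmetric])
    finally show ?thesis using True by simp
  next
    case False
    then have "\<forall>i\<in>?P. L1_vertex m A i X = 0" by (auto simp: L1_vertex_def)
    then have "(\<Sum>i\<in>?P. u i * L1_vertex m A i X) = 0" by simp
    then show ?thesis using False by (subst if_not_P) simp_all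
  qed
qed

definition S_set where
  "S_set \<Theta> m A = {ma \<in> mass_space_A \<Theta> A. \<forall>X\<in>Pow A - {{}}. m X \<le> ma X}"

lemma Cl_eq_S:
  assumes fin: "finite \<Theta>" and mass: "is_mass \<Theta> m" and sub: "A \<subseteq> \<Theta>" and ne: "A \<noteq> {}"
  shows "Cl (Pow A - {{}}) (L1_vertex m A) = S_set \<Theta> m A"
proof -
  let ?P = "Pow A - {{}}"
  let ?b = "bel m A"
  have fA: "finite (Pow A)" using fin sub finite_subset by blast
  have fP: "finite ?P" using fA by simp
  have nn: "\<And>B. 0 \<le> m B" and m0: "m {} = 0" and mout: "\<And>B. \<not> B \<subseteq> \<Theta> \<Longrightarrow> m B = 0"
    using mass unfolding is_mass_def by auto
  have b1: "?b \<le> 1" and bs: "sum m ?P = ?b" using beta_facts[OF fin mass sub] by auto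
  define g where "g u = (\<lambda>X. if X \<in> ?P then m X + u X * (1 - ?b) else 0)" for u :: "'a set \<Rightarrow> real"
  have gS: "g u \<in> S_set \<Theta> m A" if u0: "\<forall>i\<in>?P. 0 \<le> u i" and u1: "sum u ?P = 1" for u
  proof -
    have nng: "\<And>B. 0 \<le> g u B" using u0 nn b1 by (auto simp: g_def)
    have "sum (g u) (Pow \<Theta>) = sum (g u) ?P"
      using fin sub by (intro sum.mono_neutral_right) (auto simp: g_def)
    also have "\<dots> = sum (\<lambda>X. m X + u X * (1 - ?b)) ?P" by (intro sum.cong) (auto simp: g_def)
    also have "\<dots> = 1" using bs u1 by (simp add: sum.distrib sum_distrib_right[symmetric])
    finally have "sum (g u) (Pow \<Theta>) = 1" .
    then have "g u \<in> mass_space_A \<Theta> A"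
      unfolding mass_space_A_def is_mass_def using nng sub by (auto simp: g_def)
    then show ?thesis unfolding S_set_def using u0 b1
      by (auto simp: g_def)
  qed
  show ?thesis
  proof
    show "Cl ?P (L1_vertex m A) \<subseteq> S_set \<Theta> m A"
    proof
      fix f assume "f \<in> Cl ?P (L1_vertex m A)"
      then obtain u where f: "f = (\<lambda>X. \<Sum>i\<in>?P. u i * L1_vertex m A i X)"
        and u0: "\<forall>i\<in>?P. 0 \<le> u i" and u1: "sum u ?P = 1" unfolding Cl_def by auto
      have "f = g u" unfolding f g_def using Cl_eval[OF fA u1] by simp
      then show "f \<in> S_set \<Theta> m A" using gS[OF u0 u1] by simp
    qed
  next
    show "S_set \<Theta> m A \<subseteq> Cl ?P (L1_vertex m A)"
    proof
      fix ma assume maS: "ma \<in> S_set \<Theta> m A"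
      then have ma: "ma \<in> mass_space_A \<Theta> A" and ge: "\<forall>X\<in>?P. m X \<le> ma X"
        unfolding S_set_def by auto
      note MF = MA_facts[OF fin sub ma]
      have sd: "sum (\<lambda>X. ma X - m X) ?P = 1 - ?b" using MF(1) bs by (simp add: sum_subtractf)
      obtain u where u0: "\<forall>i\<in>?P. 0 \<le> u i" and u1: "sum u ?P = 1"
        and uma: "\<forall>X\<in>?P. ma X = m X + u X * (1 - ?b)"
      proof (cases "?b = 1")
        case True
        have "\<forall>X\<in>?P. ma X - m X = 0"
          using sd True ge fP by (subst sum_nonneg_eq_0_iff[symmetric]) auto
        moreover have "A \<in> ?P" using ne by auto
        ultimately show ?thesis using fP True
          by (intro that[of "\<lambda>i. if i = A then 1 else 0"]) auto
      next
        case False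
        then have pos: "1 - ?b > 0" using b1 by simp
        show ?thesis
        proof (rule that[of "\<lambda>X. (ma X - m X) / (1 - ?b)"])
          show "\<forall>i\<in>?P. 0 \<le> (ma i - m i) / (1 - ?b)" using ge pos by auto
          show "(\<Sum>i\<in>?P. (ma i - m i) / (1 - ?b)) = 1"
            using sd pos by (simp add: sum_divide_distrib[symmetric])
          show "\<forall>X\<in>?P. ma X = m X + (ma X - m X) / (1 - ?b) * (1 - ?b)" using pos by simp
        qed
      qed
      have "ma = g u"
      proof
        fix X show "ma X = g u X" using uma MF(2)[of X] by (auto simp: g_def)
      qed
      then have "ma = (\<lambda>X. \<Sum>i\<in>?P. u i * L1_vertex m A i X)"
        using Cl_eval[OF fA u1] unfolding g_def by simp
      then show "ma \<in> Cl ?P (L1_vertex m A)" unfolding Cl_def using u0 u1 by blast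
    qed
  qed
qed

theorem theorem2:
  fixes \<Theta> A :: "'a set" and m :: "'a set \<Rightarrow> real"
  assumes "finite \<Theta>" and "is_mass \<Theta> m" and "A \<noteq> {}" and "A \<subseteq> \<Theta>"
  shows "L1_cond \<Theta> m A = Cl (Pow A - {{}}) (L1_vertex m A)
         \<and> (\<forall>B. B \<noteq> {} \<and> B \<subseteq> A \<longrightarrow> L1_vertex m A B B = m B + pl \<Theta> m (\<Theta> - A))"
proof
  have CS: "Cl (Pow A - {{}}) (L1_vertex m A) = S_set \<Theta> m A"
    using Cl_eq_S assms by blast
  have AP: "A \<in> Pow A - {{}}" using assms by auto
  have fP: "finite (Pow A - {{}})" using assms(1,4) finite_subset by blast
  have "\<exists>u::'a set \<Rightarrow> real. (\<forall>i\<in>Pow A - {{}}. 0 \<le> u i) \<and> sum u (Pow A - {{}}) = 1"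
    by (intro exI[of _ "\<lambda>i. if i = A then (1::real) else 0"]) (simp add: sum.delta[OF fP] AP assms(3))
  then obtain u :: "'a set \<Rightarrow> real" where "(\<forall>i\<in>Pow A - {{}}. 0 \<le> u i) \<and> sum u (Pow A - {{}}) = 1" by blast
  then have "(\<lambda>X. \<Sum>i\<in>Pow A - {{}}. u i * L1_vertex m A i X)
     \<in> Cl (Pow A - {{}}) (L1_vertex m A)"
    unfolding Cl_def by blast
  then obtain s0 where s0: "s0 \<in> S_set \<Theta> m A" using CS by auto
  have "L1_cond \<Theta> m A = S_set \<Theta> m A"
  proof
    show "L1_cond \<Theta> m A \<subseteq> S_set \<Theta> m A"
    proof
      fix ma assume "ma \<in> L1_cond \<Theta> m A"
      then have ma: "ma \<in> mass_space_A \<Theta> A" and le: "L1_dist \<Theta> m ma \<le> L1_dist \<Theta> m s0"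
        using s0 unfolding L1_cond_def S_set_def by auto
      have "L1_dist \<Theta> m s0 = 2 * (1 - bel m A)"
        using s0 dist_char(2)[OF assms(1,2,4)] unfolding S_set_def by auto
      then have "L1_dist \<Theta> m ma = 2 * (1 - bel m A)"
        using le dist_char(1)[OF assms(1,2,4) ma] by linarith
      then show "ma \<in> S_set \<Theta> m A" using dist_char(2)[OF assms(1,2,4) ma] ma
        unfolding S_set_def by auto
    qed
  next
    show "S_set \<Theta> m A \<subseteq> L1_cond \<Theta> m A"
    proof
      fix ma assume "ma \<in> S_set \<Theta> m A"
      then have ma: "ma \<in> mass_space_A \<Theta> A" and d: "L1_dist \<Theta> m ma = 2 * (1 - bel m A)"
        using dist_char(2)[OF assms(1,2,4)] unfolding S_set_def by auto
      show "ma \<in> L1_cond \<Theta> m A" unfolding L1_cond_def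
        using ma d dist_char(1)[OF assms(1,2,4)] by auto
    qed
  qed
  then show "L1_cond \<Theta> m A = Cl (Pow A - {{}}) (L1_vertex m A)" using CS by simp
next
  have "\<Theta> - (\<Theta> - A) = A" using assms(4) by blast
  then show "\<forall>B. B \<noteq> {} \<and> B \<subseteq> A \<longrightarrow> L1_vertex m A B B = m B + pl \<Theta> m (\<Theta> - A)"
    by (simp add: L1_vertex_def pl_def)
qed

end
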